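(* Let $G$ be a group and let $X$ and $Y$ be free $G$-spaces. There exists a continuous $G$-equivariant map $F:X*G\to Y$ (with the diagonal action on $X*G$) if and only if there exists a continuous $G$-equivariant map $f:X\to Y$ that is nullhomotopic (i.e. homotopic, through not necessarily equivariant maps, to a constant map).
   Context: The join $X*G$ consists of classes $[x,t,h]$ with $x\in X$, $t\in[0,1]$, $h\in G$ (with $G$ discrete), where $[x,0,h]=[x,0,h']$ for all $h,h'$ and $[x,1,h]=[x',1,h]$ for all $x,x'$; the diagonal action is $g[x,t,h]=[gx,t,gh]$. *)

theory Defs
  imports "HOL-Analysis.Analysis"
begin

text \<open>A (discrete) group is modelled as a type of class group_add (written additively,
  not necessarily commutative).\<close>

definition G_space :: "'a topology \<Rightarrow> ('g::group_add \<Rightarrow> 'a \<Rightarrow> 'a) \<Rightarrow> bool" where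
  "G_space X act \<longleftrightarrow>
     (\<forall>g. continuous_map X X (act g)) \<and>
     (\<forall>x\<in>topspace X. act 0 x = x) \<and>
     (\<forall>g h. \<forall>x\<in>topspace X. act (g + h) x = act g (act h x))"

definition free_G_space :: "'a topology \<Rightarrow> ('g::group_add \<Rightarrow> 'a \<Rightarrow> 'a) \<Rightarrow> bool" where
  "free_G_space X act \<longleftrightarrow> G_space X act \<and>
     (\<forall>g. \<forall>x\<in>topspace X. act g x = x \<longrightarrow> g = 0)"

definition equivariant ::
  "'a topology \<Rightarrow> ('g \<Rightarrow> 'a \<Rightarrow> 'a) \<Rightarrow> ('g \<Rightarrow> 'b \<Rightarrow> 'b) \<Rightarrow> ('a \<Rightarrow> 'b) \<Rightarrow> bool" where
  "equivariant X actX actY f \<longleftrightarrow> (\<forall>g. \<forall>x\<in>topspace X. f (actX g x) = actY g (f x))"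

definition pre_join :: "'a topology \<Rightarrow> ('a \<times> real \<times> 'g) topology" where
  "pre_join X = prod_topology X
     (prod_topology (subtopology euclideanreal {0..1}) (discrete_topology (UNIV :: 'g set)))"

text \<open>The identifications: [x,0,h] = [x,0,h'] and [x,1,h] = [x',1,h].\<close>

definition join_rel :: "'a \<times> real \<times> 'g \<Rightarrow> 'a \<times> real \<times> 'g \<Rightarrow> bool" where
  "join_rel p q \<longleftrightarrow> (case p of (x, t, h) \<Rightarrow> case q of (x', t', h') \<Rightarrow>
     t = t' \<and> ((x = x' \<and> h = h') \<or> (t = 0 \<and> x = x') \<or> (t = 1 \<and> h = h')))"

definition join_class :: "'a topology \<Rightarrow> 'a \<times> real \<times> 'g \<Rightarrow> ('a \<times> real \<times> 'g) set" where
  "join_class X p = {q \<in> topspace (pre_join X). join_rel p q}"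

text \<open>The join X*G with the quotient topology; its points are the equivalence classes.\<close>

definition join_topology :: "'a topology \<Rightarrow> ('a \<times> real \<times> 'g) set topology" where
  "join_topology X = topology (\<lambda>U. U \<subseteq> join_class X ` topspace (pre_join X) \<and>
      openin (pre_join X) {p \<in> topspace (pre_join X). join_class X p \<in> U})"

definition join_act :: "('g::group_add \<Rightarrow> 'a \<Rightarrow> 'a) \<Rightarrow> 'g \<Rightarrow> ('a \<times> real \<times> 'g) set \<Rightarrow> ('a \<times> real \<times> 'g) set" where
  "join_act act g C = (\<lambda>(x, t, h). (act g x, t, g + h)) ` C"

definition nullhomotopic :: "'a topology \<Rightarrow> 'b topology \<Rightarrow> ('a \<Rightarrow> 'b) \<Rightarrow> bool" where
  "nullhomotopic X Y f \<longleftrightarrow> (\<exists>c. homotopic_with (\<lambda>_. True) X Y f (\<lambda>_. c))"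

end

theory Submission
  imports Defs
begin

lemma topspace_pre_join: "topspace (pre_join X) = topspace X \<times> {0..1} \<times> UNIV"
  by (simp add: pre_join_def)

lemma istop_join: "istopology (\<lambda>U::('a \<times> real \<times> 'g) set set. U \<subseteq> join_class X ` topspace (pre_join X) \<and>
      openin (pre_join X) {p \<in> topspace (pre_join X). join_class X p \<in> U})"
  unfolding istopology_def
proof (rule conjI; intro allI impI)
  fix S T :: "('a \<times> real \<times> 'g) set set" assume "S \<subseteq> join_class X ` topspace (pre_join X) \<and>
      openin (pre_join X) {p \<in> topspace (pre_join X). join_class X p \<in> S}"
    "T \<subseteq> join_class X ` topspace (pre_join X) \<and>
      openin (pre_join X) {p \<in> topspace (pre_join X). join_class X p \<in> T}"
  then show "S \<inter> T \<subseteq> join_class X ` topspace (pre_join X) \<and>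
      openin (pre_join X) {p \<in> topspace (pre_join X). join_class X p \<in> S \<inter> T}"
    using openin_Int[of "pre_join X" "{p \<in> topspace (pre_join X). join_class X p \<in> S}"
        "{p \<in> topspace (pre_join X). join_class X p \<in> T}"]
    by (auto simp: Collect_conj_eq[symmetric] intro: back_subst[where P="openin _"])
next
  fix K :: "('a \<times> real \<times> 'g) set set set" assume K: "\<forall>S\<in>K. S \<subseteq> join_class X ` topspace (pre_join X) \<and>
      openin (pre_join X) {p \<in> topspace (pre_join X). join_class X p \<in> S}"
  have "{p \<in> topspace (pre_join X). join_class X p \<in> \<Union>K} =
     \<Union>((\<lambda>S. {p \<in> topspace (pre_join X). join_class X p \<in> S}) ` K)" by auto
  then show "\<Union>K \<subseteq> join_class X ` topspace (pre_join X) \<and>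
      openin (pre_join X) {p \<in> topspace (pre_join X). join_class X p \<in> \<Union>K}"
    using K by auto
qed

lemma openin_join: "openin (join_topology X) U \<longleftrightarrow> U \<subseteq> join_class X ` topspace (pre_join X) \<and>
      openin (pre_join X) {p \<in> topspace (pre_join X). join_class X p \<in> U}"
  unfolding join_topology_def topology_inverse'[OF istop_join] by simp

lemma topspace_join: "topspace (join_topology X) = join_class X ` topspace (pre_join X)"
proof -
  have "openin (join_topology X) (join_class X ` topspace (pre_join X))"
    unfolding openin_join by (auto intro: back_subst[where P="openin _", OF openin_topspace])
  moreover have "topspace (join_topology X) \<subseteq> join_class X ` topspace (pre_join X)"
    by (metis openin_join openin_topspace)
  ultimately show ?thesis using openin_subset by blast
qed

lemma quotient_join: "quotient_map (pre_join X) (join_topology X) (join_class X)"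
  unfolding quotient_map_def topspace_join
  by (auto simp: openin_join)

lemma c1: "s \<in> {0..1} \<Longrightarrow> continuous_map X (pre_join X) (\<lambda>x. (x, s, k))"
  unfolding pre_join_def
  by (intro continuous_map_pairedI) (auto)

lemma c2: "continuous_map (prod_topology (subtopology euclideanreal {0..1}) X) (pre_join X)
   (\<lambda>z. (snd z, fst z, k))"
  unfolding pre_join_def
  by (intro continuous_map_pairedI continuous_map_snd continuous_map_fst) auto

lemma c3: "continuous_map X X a \<Longrightarrow> continuous_map (pre_join X) (prod_topology (subtopology euclideanreal {0..1}) X)
   (\<lambda>p. (fst (snd p), a (fst p)))"
  unfolding pre_join_def
  apply (intro continuous_map_pairedI)
  using continuous_map_compose[OF continuous_map_snd continuous_map_fst, unfolded o_def] apply blast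
  using continuous_map_compose[OF continuous_map_fst, unfolded o_def] by blast

lemma c4: "continuous_map (pre_join X) (discrete_topology UNIV) (\<lambda>p. snd (snd p))"
  unfolding pre_join_def
  using continuous_map_compose[OF continuous_map_snd continuous_map_snd, unfolded o_def] by blast

lemma rel_class: "p' \<in> topspace (pre_join X) \<Longrightarrow> join_class X p = join_class X p' \<Longrightarrow> join_rel p p'"
  proof -
  assume a: "p' \<in> topspace (pre_join X)" "join_class X p = join_class X p'"
  have "join_rel p' p'" by (cases p') (simp add: join_rel_def)
  then have "p' \<in> join_class X p'" using a unfolding join_class_def by auto
  then show "join_rel p p'" using a unfolding join_class_def by auto
qed

lemma class0: "join_class X (x,0,h) = join_class X (x,0,h')"
  unfolding join_class_def join_rel_def by auto

lemma class1: "join_class X (x,1,h) = join_class X (x',1,h)"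
  unfolding join_class_def join_rel_def by auto

lemma act_class:
  assumes G: "G_space X act" and x: "x \<in> topspace X"
  shows "join_act act g (join_class X (x,t,h)) = join_class X (act g x, t, g + h)"
proof -
  have cg: "\<And>g. continuous_map X X (act g)" and a0: "\<And>y. y \<in> topspace X \<Longrightarrow> act 0 y = y"
    and aa: "\<And>g h y. y \<in> topspace X \<Longrightarrow> act (g + h) y = act g (act h y)"
    using G unfolding G_space_def by auto
  have inv: "act (-g) (act g y) = y" "act g (act (-g) y) = y" if "y \<in> topspace X" for y g
    using aa[OF that, of "-g" g] aa[OF that, of g "-g"] a0[OF that] by auto
  have ts: "act g y \<in> topspace X" if "y \<in> topspace X" for y g
    using cg[of g] that unfolding continuous_map_def by (simp add: Pi_iff)
  show ?thesis
  proof
    show "join_act act g (join_class X (x, t, h)) \<subseteq> join_class X (act g x, t, g + h)"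
    proof
      fix p assume "p \<in> join_act act g (join_class X (x, t, h))"
      then obtain y s k where q: "(y,s,k) \<in> join_class X (x, t, h)" and pe: "p = (act g y, s, g + k)"
        unfolding join_act_def by auto
      have y: "y \<in> topspace X" and s: "s \<in> {0..1}" and r: "join_rel (x, t, h) (y,s,k)"
        using q unfolding join_class_def topspace_pre_join by auto
      have "join_rel (act g x, t, g + h) (act g y, s, g + k)"
        using r unfolding join_rel_def by auto
      then show "p \<in> join_class X (act g x, t, g + h)"
        unfolding join_class_def topspace_pre_join pe using ts[OF y] s by auto
    qed
    show "join_class X (act g x, t, g + h) \<subseteq> join_act act g (join_class X (x, t, h))"
    proof
      fix p assume p: "p \<in> join_class X (act g x, t, g + h)"
      obtain y s k where pe: "p = (y,s,k)" by (metis prod_cases3)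
      have y: "y \<in> topspace X" and s: "s \<in> {0..1}" and r: "join_rel (act g x, t, g + h) (y,s,k)"
        using p pe unfolding join_class_def topspace_pre_join by auto
      have "(act (-g) y, s, -g + k) \<in> join_class X (x,t,h)"
        unfolding join_class_def topspace_pre_join
      proof (intro CollectI conjI)
        show "(act (- g) y, s, - g + k) \<in> topspace X \<times> {0..1} \<times> UNIV" using ts[OF y] s by auto
        have "t = s" using r unfolding join_rel_def by auto
        moreover have "(act g x = y \<and> g + h = k) \<or> (t = 0 \<and> act g x = y) \<or> (t = 1 \<and> g + h = k)"
          using r unfolding join_rel_def by auto
        moreover have "g + h = k \<Longrightarrow> h = -g + k" by (metis add.assoc add.left_inverse add_0)
        moreover have "act g x = y \<Longrightarrow> x = act (-g) y" using inv(1)[OF x] by metis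
        ultimately show "join_rel (x, t, h) (act (- g) y, s, - g + k)"
          unfolding join_rel_def by auto
      qed
      moreover have "p = (\<lambda>(x, t, h). (act g x, t, g + h)) (act (-g) y, s, -g + k)"
        using pe inv[OF y] by (simp add: add.assoc[symmetric])
      ultimately show "p \<in> join_act act g (join_class X (x, t, h))"
        unfolding join_act_def by blast
    qed
  qed
qed

lemma G_facts:
  assumes "G_space X act"
  shows "\<And>g. continuous_map X X (act g)" "\<And>y. y \<in> topspace X \<Longrightarrow> act 0 y = y"
    "\<And>g h y. y \<in> topspace X \<Longrightarrow> act (g + h) y = act g (act h y)"
    "\<And>g y. y \<in> topspace X \<Longrightarrow> act g y \<in> topspace X"
proof -
  show c: "\<And>g. continuous_map X X (act g)" using assms unfolding G_space_def by blast
  show "\<And>y. y \<in> topspace X \<Longrightarrow> act 0 y = y" using assms unfolding G_space_def by blast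
  show "\<And>g h y. y \<in> topspace X \<Longrightarrow> act (g + h) y = act g (act h y)"
    using assms unfolding G_space_def by blast
  show "\<And>g y. y \<in> topspace X \<Longrightarrow> act g y \<in> topspace X"
    using c unfolding continuous_map_def by (simp add: Pi_iff)
qed

theorem lemma4p1:
  fixes X :: "'a topology" and Y :: "'b topology"
    and actX :: "'g::group_add \<Rightarrow> 'a \<Rightarrow> 'a" and actY :: "'g \<Rightarrow> 'b \<Rightarrow> 'b"
  assumes "free_G_space X actX" and "free_G_space Y actY"
  shows "(\<exists>F. continuous_map (join_topology X) Y F \<and>
              equivariant (join_topology X) (join_act actX) actY F)
     \<longleftrightarrow> (\<exists>f. continuous_map X Y f \<and> equivariant X actX actY f \<and> nullhomotopic X Y f)"
proof -
  have GX: "G_space X actX" and GY: "G_space Y actY"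
    using assms unfolding free_G_space_def by auto
  note X = G_facts[OF GX] and Y = G_facts[OF GY]
  let ?q = "join_class X :: 'a \<times> real \<times> 'g \<Rightarrow> _"
  have qc: "continuous_map (pre_join X) (join_topology X) ?q"
    using quotient_imp_continuous_map[OF quotient_join] .
  show ?thesis
  proof
    assume "\<exists>F. continuous_map (join_topology X) Y F \<and>
              equivariant (join_topology X) (join_act actX) actY F"
    then obtain F where Fc: "continuous_map (join_topology X) Y F"
      and Fe: "equivariant (join_topology X) (join_act actX) actY F" by blast
    define f where "f x = F (?q (x,0,0))" for x
    have fc: "continuous_map X Y f"
      unfolding f_def
      using continuous_map_compose[OF continuous_map_compose[OF c1 qc] Fc, unfolded o_def]
      by simp
    have fe: "equivariant X actX actY f"
      unfolding equivariant_def
    proof (intro allI ballI)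
      fix g x assume x: "x \<in> topspace X"
      have "?q (x,0,0) \<in> topspace (join_topology X)"
        unfolding topspace_join topspace_pre_join using x by auto
      then have "F (join_act actX g (?q (x,0,0))) = actY g (F (?q (x,0,0)))"
        using Fe unfolding equivariant_def by blast
      moreover have "join_act actX g (?q (x,0,0)) = ?q (actX g x, 0, 0)"
        using act_class[OF GX x] class0 by metis
      ultimately show "f (actX g x) = actY g (f x)" unfolding f_def by simp
    qed
    have fn: "nullhomotopic X Y f"
      unfolding nullhomotopic_def
    proof (rule exI)
      have hw: "homotopic_with (\<lambda>_. True) X Y f (\<lambda>_. F (?q (undefined,1,0))) \<longleftrightarrow> (\<exists>h.
           continuous_map (prod_topology (top_of_set {0..1::real}) X) Y h \<and>
        (\<forall>x\<in>topspace X. h (0, x) = f x) \<and> (\<forall>x\<in>topspace X. h (1, x) = F (?q (undefined,1,0))))"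
        by (subst homotopic_with) simp_all
      have "continuous_map (prod_topology (top_of_set {0..1::real}) X) Y (\<lambda>z. F (?q (snd z, fst z, 0)))"
        using continuous_map_compose[OF continuous_map_compose[OF c2 qc] Fc, unfolded o_def] .
      moreover have "\<forall>x\<in>topspace X. F (?q (snd (0::real, x), fst (0::real, x), 0)) = f x"
        unfolding f_def by simp
      moreover have "\<forall>x\<in>topspace X. F (?q (snd (1::real, x), fst (1::real, x), 0)) = F (?q (undefined,1,0))"
        using class1 by (metis fst_conv snd_conv)
      ultimately show "homotopic_with (\<lambda>_. True) X Y f (\<lambda>_. F (?q (undefined,1,0)))"
        unfolding hw by blast
    qed
    show "\<exists>f. continuous_map X Y f \<and> equivariant X actX actY f \<and> nullhomotopic X Y f"
      using fc fe fn by blast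
  next
    assume "\<exists>f. continuous_map X Y f \<and> equivariant X actX actY f \<and> nullhomotopic X Y f"
    then obtain f c where fc: "continuous_map X Y f" and fe: "equivariant X actX actY f"
      and fh: "homotopic_with (\<lambda>_. True) X Y f (\<lambda>_. c)"
      unfolding nullhomotopic_def by blast
    obtain H where Hc: "continuous_map (prod_topology (top_of_set {0..1::real}) X) Y H"
      and H0: "\<And>x. x \<in> topspace X \<Longrightarrow> H (0,x) = f x"
      and H1: "\<And>x. x \<in> topspace X \<Longrightarrow> H (1,x) = c"
      using fh by (subst (asm) homotopic_with) auto
    define \<phi> where "\<phi> p = actY (snd (snd p)) (H (fst (snd p), actX (- snd (snd p)) (fst p)))"
      for p :: "'a \<times> real \<times> 'g"
    have pc: "continuous_map (pre_join X) Y (\<lambda>p. actY k (H (fst (snd p), actX (-k) (fst p))))" for k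
      using continuous_map_compose[OF continuous_map_compose[OF c3[OF X(1)] Hc] Y(1), unfolded o_def] .
    have \<phi>c: "continuous_map (pre_join X) Y \<phi>"
    proof (rule pasting_lemma[where I=UNIV and T="\<lambda>k. {p \<in> topspace (pre_join X). snd (snd p) = k}"
          and f="\<lambda>k p. actY k (H (fst (snd p), actX (-k) (fst p)))"])
      show "openin (pre_join X) {p \<in> topspace (pre_join X). snd (snd p) = k}" for k
        using openin_continuous_map_preimage[OF c4, of "{k}"] by simp
      show "continuous_map (subtopology (pre_join X) {p \<in> topspace (pre_join X). snd (snd p) = k}) Y
          (\<lambda>p. actY k (H (fst (snd p), actX (-k) (fst p))))" for k
        using pc continuous_map_from_subtopology by blast
    qed (auto simp: \<phi>_def)
    have ts: "H (t, y) \<in> topspace Y" if "y \<in> topspace X" "t \<in> {0..1}" for t y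
      using Hc that by (auto simp: continuous_map_def)
    have \<phi>eq: "\<phi> p = \<phi> p'" if p: "p \<in> topspace (pre_join X)" and p': "p' \<in> topspace (pre_join X)"
      and e: "?q p = ?q p'" for p p'
    proof -
      obtain x t h where pe: "p = (x,t,h)" by (metis prod_cases3)
      obtain x' t' h' where pe': "p' = (x',t',h')" by (metis prod_cases3)
      have x: "x \<in> topspace X" and x': "x' \<in> topspace X" using p p' pe pe'
        unfolding topspace_pre_join by auto
      have r: "join_rel p p'" using rel_class[OF p' e] .
      have z: "\<phi> (z,0,k) = f z" if z: "z \<in> topspace X" for z k
      proof -
        have "\<phi> (z,0,k) = actY k (f (actX (-k) z))" unfolding \<phi>_def using H0 X(4)[OF z] by simp
        also have "\<dots> = actY k (actY (-k) (f z))"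
          using fe z unfolding equivariant_def by simp
        also have "\<dots> = f z"
        proof -
          have fz: "f z \<in> topspace Y" using fc z unfolding continuous_map_def by (simp add: Pi_iff)
          show ?thesis using Y(3)[OF fz, of k "-k"] Y(2)[OF fz] by simp
        qed
        finally show ?thesis .
      qed
      have o: "\<phi> (z,1,k) = actY k c" if z: "z \<in> topspace X" for z k
        unfolding \<phi>_def using H1 X(4)[OF z] by simp
      show ?thesis using r z x x' o unfolding pe pe' join_rel_def by auto
    qed
    obtain F where Fc: "continuous_map (join_topology X) Y F"
      and Fq: "\<And>p. p \<in> topspace (pre_join X) \<Longrightarrow> F (?q p) = \<phi> p"
      using quotient_map_lift_exists[OF quotient_join \<phi>c] \<phi>eq by metis
    have "equivariant (join_topology X) (join_act actX) actY F"
      unfolding equivariant_def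
    proof (intro allI ballI)
      fix g :: 'g and C :: "('a \<times> real \<times> 'g) set" assume "C \<in> topspace (join_topology X)"
      then obtain x t h where C: "C = ?q (x,t,h)" and x: "x \<in> topspace X" and t: "t \<in> {0..1}"
        unfolding topspace_join topspace_pre_join by auto
      have "F (join_act actX g C) = F (?q (actX g x, t, g + h))"
        using act_class[OF GX x] C by simp
      also have "\<dots> = \<phi> (actX g x, t, g + h)"
        using Fq X(4)[OF x] t unfolding topspace_pre_join by auto
      also have "\<dots> = actY (g + h) (H (t, actX (- (g + h)) (actX g x)))"
        unfolding \<phi>_def by simp
      also have "actX (- (g + h)) (actX g x) = actX (-h) x"
        using X(3)[OF x, of "- (g + h)" g] by (simp add: minus_add add.assoc)
      also have "actY (g + h) (H (t, actX (-h) x)) = actY g (actY h (H (t, actX (-h) x)))"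
        using Y(3) ts[OF X(4)[OF x] t] by blast
      also have "actY h (H (t, actX (-h) x)) = F C"
        using Fq[of "(x,t,h)"] C x t unfolding \<phi>_def topspace_pre_join by simp
      finally show "F (join_act actX g C) = actY g (F C)" .
    qed
    then show "\<exists>F. continuous_map (join_topology X) Y F \<and>
              equivariant (join_topology X) (join_act actX) actY F" using Fc by blast
  qed
qed

end
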